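(* Let $D$ be a digraph and let $H$ be a source-sink-split of $D$. Then $\operatorname{bw}(u(H))=\operatorname{dbw}(D)$.
   Context: All digraphs are finite and loopless, without parallel edges. A source has no incoming edges, a sink no outgoing edges. Two distinct vertices are source/sink-identifiable if both are sources or both are sinks; identifying them replaces them by one new vertex $\gamma$ with $N^-(\gamma)=N^-(x)\cup N^-(y)$ and $N^+(\gamma)=N^+(x)\cup N^+(y)$. A digraph $H$ is a source-sink-split of $D$ if every source and every sink of $H$ has degree exactly $1$ and $D$ is obtained from $H$ by a finite sequence of identifications of source/sink-identifiable pairs. $u(H)$ is the undirected multigraph with one edge $xy$ per directed edge $\vec{xy}$. Branch-width of an undirected multigraph $G$: minimum over $(T,\tau)$ ($T$ a tree of maximum degree at most three, $\tau$ a bijection from leaves onto $E(G)$) of the maximum over tree edges $t$ of the number of vertices incident with an edge of $\tau(Y)$ and an edge of $E(G)\setminus\tau(Y)$, $Y$ the leaves on one side of $T-t$ (0 if no tree edges). Directed branch-width: same with $\beta$ onto $E(D)$ and order $|S^V_{\beta(Y)}\cup S^V_{E(D)\setminus\beta(Y)}|$, where $S^V_X=\{y: \exists x,z,\ \vec{xy}\in E(D)\setminus X,\ \vec{yz}\in X\}$. *)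

theory Defs
  imports Main
begin

definition wf_digraph :: "'a set \<Rightarrow> ('a \<times> 'a) set \<Rightarrow> bool" where
  "wf_digraph V E \<longleftrightarrow> finite V \<and> E \<subseteq> V \<times> V \<and> (\<forall>x. (x, x) \<notin> E)"

definition in_nbrs :: "('a \<times> 'a) set \<Rightarrow> 'a \<Rightarrow> 'a set" where
  "in_nbrs E x = {y. (y, x) \<in> E}"

definition out_nbrs :: "('a \<times> 'a) set \<Rightarrow> 'a \<Rightarrow> 'a set" where
  "out_nbrs E x = {y. (x, y) \<in> E}"

definition is_source :: "'a set \<Rightarrow> ('a \<times> 'a) set \<Rightarrow> 'a \<Rightarrow> bool" where
  "is_source V E x \<longleftrightarrow> x \<in> V \<and> in_nbrs E x = {}"

definition is_sink :: "'a set \<Rightarrow> ('a \<times> 'a) set \<Rightarrow> 'a \<Rightarrow> bool" where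
  "is_sink V E x \<longleftrightarrow> x \<in> V \<and> out_nbrs E x = {}"

definition vdegree :: "('a \<times> 'a) set \<Rightarrow> 'a \<Rightarrow> nat" where
  "vdegree E x = card (in_nbrs E x) + card (out_nbrs E x)"

definition ident_step :: "'a set \<times> ('a \<times> 'a) set \<Rightarrow> 'a set \<times> ('a \<times> 'a) set \<Rightarrow> bool" where
  "ident_step G G' \<longleftrightarrow> (\<exists>x y g. x \<noteq> y \<and>
      ((is_source (fst G) (snd G) x \<and> is_source (fst G) (snd G) y) \<or>
       (is_sink (fst G) (snd G) x \<and> is_sink (fst G) (snd G) y)) \<and>
      g \<notin> fst G - {x, y} \<and>
      fst G' = insert g (fst G - {x, y}) \<and>
      snd G' = {(a, b). (a, b) \<in> snd G \<and> a \<notin> {x, y} \<and> b \<notin> {x, y}}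
               \<union> {(a, g) | a. a \<in> in_nbrs (snd G) x \<union> in_nbrs (snd G) y}
               \<union> {(g, b) | b. b \<in> out_nbrs (snd G) x \<union> out_nbrs (snd G) y})"

definition digraph_iso :: "'a set \<Rightarrow> ('a \<times> 'a) set \<Rightarrow> 'b set \<Rightarrow> ('b \<times> 'b) set \<Rightarrow> bool" where
  "digraph_iso V E V' E' \<longleftrightarrow>
     (\<exists>f. bij_betw f V V' \<and> E' = (\<lambda>(a, b). (f a, f b)) ` E)"

text \<open>D (vertices VD, edges ED) is obtained from H by a finite sequence of identifications
  (up to the naming of the newly created vertices, i.e. up to isomorphism).\<close>

definition source_sink_split :: "'a set \<Rightarrow> ('a \<times> 'a) set \<Rightarrow> 'b set \<Rightarrow> ('b \<times> 'b) set \<Rightarrow> bool" where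
  "source_sink_split VH EH VD ED \<longleftrightarrow>
     wf_digraph VH EH \<and>
     (\<forall>x. is_source VH EH x \<or> is_sink VH EH x \<longrightarrow> vdegree EH x = 1) \<and>
     (\<exists>V' E'. ident_step\<^sup>*\<^sup>* (VH, EH) (V', E') \<and> digraph_iso V' E' VD ED)"

text \<open>A tree with node set N and edge set TE (each edge a 2-element set of nodes):
  connected and every edge is a bridge.\<close>

definition tree_rel :: "nat set set \<Rightarrow> (nat \<times> nat) set" where
  "tree_rel TE = {(a, b). {a, b} \<in> TE}"

definition is_tree :: "nat set \<Rightarrow> nat set set \<Rightarrow> bool" where
  "is_tree N TE \<longleftrightarrow> finite N \<and> N \<noteq> {} \<and>
     (\<forall>e\<in>TE. e \<subseteq> N \<and> card e = 2) \<and>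
     (\<forall>a\<in>N. \<forall>b\<in>N. (a, b) \<in> (tree_rel TE)\<^sup>*) \<and>
     (\<forall>a b. {a, b} \<in> TE \<longrightarrow> (a, b) \<notin> (tree_rel (TE - {{a, b}}))\<^sup>*)"

definition tdeg :: "nat set set \<Rightarrow> nat \<Rightarrow> nat" where
  "tdeg TE n = card {e \<in> TE. n \<in> e}"

definition tleaves :: "nat set \<Rightarrow> nat set set \<Rightarrow> nat set" where
  "tleaves N TE = {n \<in> N. tdeg TE n \<le> 1}"

definition tside :: "nat set \<Rightarrow> nat set set \<Rightarrow> nat \<Rightarrow> nat \<Rightarrow> nat set" where
  "tside N TE a b = {l \<in> tleaves N TE. (a, l) \<in> (tree_rel (TE - {{a, b}}))\<^sup>*}"

definition decomp_width :: "('e set \<Rightarrow> nat) \<Rightarrow> nat set \<Rightarrow> nat set set \<Rightarrow> (nat \<Rightarrow> 'e) \<Rightarrow> nat" where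
  "decomp_width ord N TE \<tau> =
     Max (insert 0 {ord (\<tau> ` tside N TE a b) | a b. {a, b} \<in> TE})"

definition gen_branch_width :: "'e set \<Rightarrow> ('e set \<Rightarrow> nat) \<Rightarrow> nat" where
  "gen_branch_width F ord = Inf {w. \<exists>N TE \<tau>. is_tree N TE \<and> (\<forall>n\<in>N. tdeg TE n \<le> 3) \<and>
        bij_betw \<tau> (tleaves N TE) F \<and> w = decomp_width ord N TE \<tau>}"

text \<open>Undirected multigraph given by an edge set F and an endpoint map.\<close>
definition ug_order :: "'e set \<Rightarrow> ('e \<Rightarrow> 'v set) \<Rightarrow> 'e set \<Rightarrow> nat" where
  "ug_order F ends X = card ((\<Union> (ends ` X)) \<inter> (\<Union> (ends ` (F - X))))"

definition branch_width :: "'e set \<Rightarrow> ('e \<Rightarrow> 'v set) \<Rightarrow> nat" where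
  "branch_width F ends = gen_branch_width F (ug_order F ends)"

text \<open>u(H): one undirected edge xy per directed edge (x,y); edges are indexed by E(H).\<close>
definition u_ends :: "'a \<times> 'a \<Rightarrow> 'a set" where
  "u_ends e = {fst e, snd e}"

definition SV :: "('a \<times> 'a) set \<Rightarrow> ('a \<times> 'a) set \<Rightarrow> 'a set" where
  "SV E X = {y. \<exists>x z. (x, y) \<in> E - X \<and> (y, z) \<in> X}"

definition dbw_order :: "('a \<times> 'a) set \<Rightarrow> ('a \<times> 'a) set \<Rightarrow> nat" where
  "dbw_order E X = card (SV E X \<union> SV E (E - X))"

definition dir_branch_width :: "('a \<times> 'a) set \<Rightarrow> nat" where
  "dir_branch_width E = gen_branch_width E (dbw_order E)"

end

theory Submission
  imports Defs
begin

lemma rtrancl_isolated: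
  assumes "(a,y) \<in> R\<^sup>*" "\<forall>b. (a,b) \<notin> R" shows "y = a"
  using assms by (auto elim: converse_rtranclE)

lemma tree_rel_insert: "tree_rel (insert {n,p} TE) = tree_rel TE \<union> {(n,p),(p,n)}"
  unfolding tree_rel_def by (auto simp: doubleton_eq_iff)

lemma tree_rel_nodom:
  assumes "\<forall>e\<in>TE. n \<notin> e" shows "(n,b) \<notin> tree_rel TE" "(b,n) \<notin> tree_rel TE"
  using assms unfolding tree_rel_def by auto

lemma pend_reach1:
  assumes "\<forall>b. (n,b) \<notin> R" "\<forall>b. (b,n) \<notin> R" "n \<noteq> p" "(a,y) \<in> (R \<union> {(n,p),(p,n)})\<^sup>*" "a \<noteq> n"
  shows "(y \<noteq> n \<and> (a,y) \<in> R\<^sup>*) \<or> (y = n \<and> (a,p) \<in> R\<^sup>*)"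
  using assms(4)
proof (induction rule: rtrancl_induct)
  case base then show ?case using assms(5) by auto
next
  case (step y z)
  then show ?case using assms(1-3) by (auto intro: rtrancl_into_rtrancl)
qed

lemma pend_reach:
  assumes "\<forall>e\<in>TE. n \<notin> e" "n \<noteq> p" "a \<noteq> n"
  shows "(a,y) \<in> (tree_rel (insert {n,p} TE))\<^sup>* \<longleftrightarrow>
     (y \<noteq> n \<and> (a,y) \<in> (tree_rel TE)\<^sup>*) \<or> (y = n \<and> (a,p) \<in> (tree_rel TE)\<^sup>*)"
proof
  assume "(a,y) \<in> (tree_rel (insert {n,p} TE))\<^sup>*"
  then show "(y \<noteq> n \<and> (a,y) \<in> (tree_rel TE)\<^sup>*) \<or> (y = n \<and> (a,p) \<in> (tree_rel TE)\<^sup>*)"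
    using pend_reach1[of n "tree_rel TE" p a y] tree_rel_nodom[OF assms(1)] assms
    by (simp add: tree_rel_insert)
next
  have sub: "(tree_rel TE)\<^sup>* \<subseteq> (tree_rel (insert {n,p} TE))\<^sup>*"
    by (rule rtrancl_mono) (auto simp: tree_rel_insert)
  assume "(y \<noteq> n \<and> (a,y) \<in> (tree_rel TE)\<^sup>*) \<or> (y = n \<and> (a,p) \<in> (tree_rel TE)\<^sup>*)"
  then show "(a,y) \<in> (tree_rel (insert {n,p} TE))\<^sup>*"
  proof
    assume "y \<noteq> n \<and> (a,y) \<in> (tree_rel TE)\<^sup>*" then show ?thesis using sub by auto
  next
    assume h: "y = n \<and> (a,p) \<in> (tree_rel TE)\<^sup>*"
    then have "(a,p) \<in> (tree_rel (insert {n,p} TE))\<^sup>*" using sub by auto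
    moreover have "(p,n) \<in> tree_rel (insert {n,p} TE)" by (auto simp: tree_rel_insert)
    ultimately show ?thesis using h by (auto intro: rtrancl_into_rtrancl)
  qed
qed

lemma pend_reach_n:
  assumes "\<forall>e\<in>TE. n \<notin> e" "n \<noteq> p"
  shows "(n,y) \<in> (tree_rel (insert {n,p} TE))\<^sup>* \<longleftrightarrow> y = n \<or> (p,y) \<in> (tree_rel (insert {n,p} TE))\<^sup>*"
proof
  assume "(n,y) \<in> (tree_rel (insert {n,p} TE))\<^sup>*"
  then show "y = n \<or> (p,y) \<in> (tree_rel (insert {n,p} TE))\<^sup>*"
  proof (cases rule: converse_rtranclE)
    case (step z)
    then have "z = p" using tree_rel_nodom[OF assms(1)] by (auto simp: tree_rel_insert)
    then show ?thesis using step by auto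
  qed auto
next
  have "(n,p) \<in> tree_rel (insert {n,p} TE)" by (auto simp: tree_rel_insert)
  then show "y = n \<or> (p,y) \<in> (tree_rel (insert {n,p} TE))\<^sup>* \<Longrightarrow> (n,y) \<in> (tree_rel (insert {n,p} TE))\<^sup>*"
    by (auto intro: converse_rtrancl_into_rtrancl)
qed

lemma is_tree_finite_TE: "is_tree N TE \<Longrightarrow> finite TE"
  unfolding is_tree_def by (meson Pow_iff finite_Pow_iff rev_finite_subset subsetI)

lemma pend_tree:
  assumes T: "is_tree N TE" and n: "n \<notin> N" and p: "p \<in> N"
  shows "is_tree (insert n N) (insert {n,p} TE)"
proof -
  have sub: "\<forall>e\<in>TE. e \<subseteq> N" and c2: "\<forall>e\<in>TE. card e = 2"
    and con: "\<forall>a\<in>N. \<forall>b\<in>N. (a, b) \<in> (tree_rel TE)\<^sup>*"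
    and br: "\<forall>a b. {a, b} \<in> TE \<longrightarrow> (a, b) \<notin> (tree_rel (TE - {{a, b}}))\<^sup>*"
    and fin: "finite N"
    using T unfolding is_tree_def by auto
  have ne: "\<forall>e\<in>TE. n \<notin> e" using sub n by auto
  have np: "n \<noteq> p" using n p by auto
  have nTE: "{n,p} \<notin> TE" using ne by auto
  show ?thesis unfolding is_tree_def
  proof (intro conjI)
    show "finite (insert n N)" using fin by auto
    show "insert n N \<noteq> {}" by auto
    show "\<forall>e\<in>insert {n, p} TE. e \<subseteq> insert n N \<and> card e = 2"
      using sub c2 p np by auto
    show "\<forall>a\<in>insert n N. \<forall>b\<in>insert n N. (a, b) \<in> (tree_rel (insert {n, p} TE))\<^sup>*"
    proof (intro ballI)
      fix a b assume a: "a \<in> insert n N" and b: "b \<in> insert n N"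
      have pb: "(p, b) \<in> (tree_rel (insert {n, p} TE))\<^sup>*"
        using pend_reach[OF ne np, of p b] np con p b by auto
      show "(a, b) \<in> (tree_rel (insert {n, p} TE))\<^sup>*"
      proof (cases "a = n")
        case True then show ?thesis using pend_reach_n[OF ne np, of b] pb by auto
      next
        case False
        then have "a \<in> N" using a by auto
        then show ?thesis using pend_reach[OF ne np False, of b] con p b by auto
      qed
    qed
    show "\<forall>a b. {a, b} \<in> insert {n, p} TE \<longrightarrow> (a, b) \<notin> (tree_rel (insert {n, p} TE - {{a, b}}))\<^sup>*"
    proof (intro allI impI)
      fix a b assume ab: "{a, b} \<in> insert {n, p} TE"
      show "(a, b) \<notin> (tree_rel (insert {n, p} TE - {{a, b}}))\<^sup>*"
      proof (cases "{a,b} = {n,p}")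
        case True
        then have e: "insert {n, p} TE - {{a, b}} = TE" using nTE by auto
        have "a \<noteq> b" using True np by (auto simp: doubleton_eq_iff)
        moreover have "(x,y) \<in> (tree_rel TE)\<^sup>* \<Longrightarrow> x = n \<or> y = n \<Longrightarrow> x = y" for x y
        proof -
          assume xy: "(x,y) \<in> (tree_rel TE)\<^sup>*" and d: "x = n \<or> y = n"
          from d show "x = y"
          proof
            assume "x = n" then show ?thesis using rtrancl_isolated[OF xy] tree_rel_nodom[OF ne] by auto
          next
            assume yn: "y = n"
            have "(y,x) \<in> ((tree_rel TE)\<inverse>)\<^sup>*" using xy by (simp add: rtrancl_converse)
            then show ?thesis using rtrancl_isolated[of y x "(tree_rel TE)\<inverse>"] tree_rel_nodom[OF ne] yn by auto
          qed
        qed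
        moreover have "a = n \<or> b = n" using True by (auto simp: doubleton_eq_iff)
        ultimately show ?thesis using e by auto
      next
        case False
        then have abT: "{a,b} \<in> TE" using ab by auto
        then have an: "a \<noteq> n" "b \<noteq> n" using ne by auto
        have e: "insert {n, p} TE - {{a, b}} = insert {n,p} (TE - {{a,b}})" using False by auto
        have ne': "\<forall>e\<in>TE - {{a,b}}. n \<notin> e" using ne by auto
        show ?thesis unfolding e using pend_reach[OF ne' np an(1), of b] br abT an by auto
      qed
    qed
  qed
qed

lemma pend_tree_rev:
  assumes T: "is_tree (insert n N) (insert {n,p} TE)" and n: "n \<notin> N" and p: "p \<in> N"
    and sub: "\<forall>e\<in>TE. e \<subseteq> N"
  shows "is_tree N TE"
proof -
  have ne: "\<forall>e\<in>TE. n \<notin> e" using sub n by auto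
  have np: "n \<noteq> p" using n p by auto
  have c2: "\<forall>e\<in>TE. card e = 2"
    and con: "\<forall>a\<in>insert n N. \<forall>b\<in>insert n N. (a, b) \<in> (tree_rel (insert {n,p} TE))\<^sup>*"
    and br: "\<forall>a b. {a, b} \<in> insert {n,p} TE \<longrightarrow> (a, b) \<notin> (tree_rel (insert {n,p} TE - {{a, b}}))\<^sup>*"
    and fin: "finite (insert n N)"
    using T unfolding is_tree_def by auto
  show ?thesis unfolding is_tree_def
  proof (intro conjI)
    show "finite N" using fin by auto
    show "N \<noteq> {}" using p by auto
    show "\<forall>e\<in>TE. e \<subseteq> N \<and> card e = 2" using sub c2 by auto
    show "\<forall>a\<in>N. \<forall>b\<in>N. (a, b) \<in> (tree_rel TE)\<^sup>*"
    proof (intro ballI)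
      fix a b assume a: "a \<in> N" and b: "b \<in> N"
      then have "a \<noteq> n" "b \<noteq> n" using n by auto
      then show "(a, b) \<in> (tree_rel TE)\<^sup>*" using pend_reach[OF ne np, of a b] con a b by auto
    qed
    show "\<forall>a b. {a, b} \<in> TE \<longrightarrow> (a, b) \<notin> (tree_rel (TE - {{a, b}}))\<^sup>*"
    proof (intro allI impI notI)
      fix a b assume ab: "{a,b} \<in> TE" and r: "(a, b) \<in> (tree_rel (TE - {{a, b}}))\<^sup>*"
      have "(tree_rel (TE - {{a, b}}))\<^sup>* \<subseteq> (tree_rel (insert {n,p} TE - {{a, b}}))\<^sup>*"
        by (rule rtrancl_mono) (auto simp: tree_rel_def)
      then show False using br ab r by auto
    qed
  qed
qed

lemma tdeg_insert:
  assumes "finite TE" "E \<notin> TE"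
  shows "tdeg (insert E TE) x = tdeg TE x + (if x \<in> E then 1 else 0)"
proof -
  have "{e \<in> insert E TE. x \<in> e} = (if x \<in> E then insert E {e \<in> TE. x \<in> e} else {e \<in> TE. x \<in> e})"
    by auto
  then show ?thesis unfolding tdeg_def using assms by auto
qed

lemma tdeg_zero: "\<forall>e\<in>TE. n \<notin> e \<Longrightarrow> tdeg TE n = 0"
proof -
  assume "\<forall>e\<in>TE. n \<notin> e"
  then have e: "{e \<in> TE. n \<in> e} = {}" by auto
  show ?thesis unfolding tdeg_def e by simp
qed

lemma leaf_pendant:
  assumes T: "is_tree N TE" and l: "l \<in> tleaves N TE" and Nl: "N \<noteq> {l}"
  shows "\<exists>p. {l,p} \<in> TE \<and> l \<noteq> p \<and> p \<in> N \<and> (\<forall>e\<in>TE - {{l,p}}. l \<notin> e)"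
proof -
  have lN: "l \<in> N" and dl: "tdeg TE l \<le> 1" using l unfolding tleaves_def by auto
  obtain m where m: "m \<in> N" "m \<noteq> l" using Nl lN by auto
  have "(l,m) \<in> (tree_rel TE)\<^sup>*" using T lN m unfolding is_tree_def by auto
  then obtain p where lp: "(l,p) \<in> tree_rel TE" using m(2) by (auto elim: converse_rtranclE)
  then have lpT: "{l,p} \<in> TE" unfolding tree_rel_def by auto
  have "card {l,p} = 2" "{l,p} \<subseteq> N" using T lpT unfolding is_tree_def by auto
  then have lp2: "l \<noteq> p" "p \<in> N" by (auto simp: card_insert_if split: if_splits)
  have fin: "finite TE" using is_tree_finite_TE[OF T] .
  have "\<forall>e\<in>TE - {{l,p}}. l \<notin> e"
  proof (intro ballI notI)
    fix e assume e: "e \<in> TE - {{l,p}}" and le: "l \<in> e"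
    have "{e, {l,p}} \<subseteq> {e \<in> TE. l \<in> e}" using e le lpT by auto
    then have "card {e, {l,p}} \<le> tdeg TE l" unfolding tdeg_def
      by (intro card_mono) (use fin in auto)
    then show False using e dl by auto
  qed
  then show ?thesis using lpT lp2 by auto
qed

lemma tree_edge_nodes: "is_tree N TE \<Longrightarrow> {a,b} \<in> TE \<Longrightarrow> a \<in> N \<and> b \<in> N"
  unfolding is_tree_def by auto

lemma width_finite:
  assumes "is_tree N TE"
  shows "finite {ord (\<tau> ` tside N TE a b) | a b. {a, b} \<in> TE}"
proof -
  have "{ord (\<tau> ` tside N TE a b) | a b. {a, b} \<in> TE} \<subseteq> (\<lambda>(a,b). ord (\<tau> ` tside N TE a b)) ` (N \<times> N)"
    using tree_edge_nodes[OF assms] by fastforce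
  moreover have "finite N" using assms unfolding is_tree_def by auto
  ultimately show ?thesis by (meson finite_SigmaI finite_imageI finite_subset)
qed

lemma width_ge:
  assumes "is_tree N TE" "{a,b} \<in> TE"
  shows "ord (\<tau> ` tside N TE a b) \<le> decomp_width ord N TE \<tau>"
  unfolding decomp_width_def
  by (rule Max_ge) (use width_finite[OF assms(1)] assms(2) in auto)

lemma width_le:
  assumes "is_tree N TE" "\<And>a b. {a,b} \<in> TE \<Longrightarrow> ord (\<tau> ` tside N TE a b) \<le> w"
  shows "decomp_width ord N TE \<tau> \<le> w"
  unfolding decomp_width_def
  by (rule Max.boundedI) (use width_finite[OF assms(1)] assms(2) in auto)

lemma restrict_tree:
  assumes "is_tree N TE" "\<forall>n\<in>N. tdeg TE n \<le> 3" "M \<subseteq> tleaves N TE" "M \<noteq> {}"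
  shows "\<exists>N' TE'. is_tree N' TE' \<and> (\<forall>n\<in>N'. tdeg TE' n \<le> 3) \<and> tleaves N' TE' = M \<and> TE' \<subseteq> TE \<and>
     (\<forall>a b. {a,b} \<in> TE' \<longrightarrow> tside N' TE' a b = tside N TE a b \<inter> M)"
  using assms
proof (induction "card N" arbitrary: N TE rule: less_induct)
  case less
  note T = less.prems(1)
  show ?case
  proof (cases "tleaves N TE = M")
    case True
    have "tside N TE a b \<subseteq> M" for a b using True unfolding tside_def by auto
    then show ?thesis using True less.prems by (intro exI[of _ N] exI[of _ TE]) auto
  next
    case False
    then obtain l where l: "l \<in> tleaves N TE" "l \<notin> M" using less.prems(3) by auto
    have lN: "l \<in> N" using l unfolding tleaves_def by auto
    have Nl: "N \<noteq> {l}" using less.prems(3,4) l unfolding tleaves_def by auto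
    obtain p where p: "{l,p} \<in> TE" "l \<noteq> p" "p \<in> N" "\<forall>e\<in>TE - {{l,p}}. l \<notin> e"
      using leaf_pendant[OF T l(1) Nl] by auto
    define N0 where "N0 = N - {l}"
    define TE0 where "TE0 = TE - {{l,p}}"
    have NN: "N = insert l N0" using lN N0_def by auto
    have TT: "TE = insert {l,p} TE0" using p(1) TE0_def by auto
    have lN0: "l \<notin> N0" and pN0: "p \<in> N0" using p N0_def by auto
    have sub0: "\<forall>e\<in>TE0. e \<subseteq> N0"
      using T p(4) unfolding is_tree_def N0_def TE0_def by auto
    have T0: "is_tree N0 TE0"
      using pend_tree_rev[of l N0 p TE0] T lN0 pN0 sub0 NN TT by auto
    have fin: "finite TE0" using is_tree_finite_TE[OF T0] .
    have notin: "{l,p} \<notin> TE0" using TE0_def by auto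
    have degle: "tdeg TE0 x \<le> tdeg TE x" for x
      using tdeg_insert[OF fin notin, of x] TT by auto
    have deg0: "\<forall>n\<in>N0. tdeg TE0 n \<le> 3" using less.prems(2) degle N0_def le_trans by blast
    have M0: "M \<subseteq> tleaves N0 TE0"
      using less.prems(3) l(2) degle unfolding tleaves_def N0_def by (auto intro: le_trans)
    have card: "card N0 < card N" using lN T unfolding N0_def is_tree_def
      by (meson card_Diff1_less)
    obtain N' TE' where IH: "is_tree N' TE'" "\<forall>n\<in>N'. tdeg TE' n \<le> 3" "tleaves N' TE' = M" "TE' \<subseteq> TE0"
       "\<forall>a b. {a,b} \<in> TE' \<longrightarrow> tside N' TE' a b = tside N0 TE0 a b \<inter> M"
      using less.hyps[OF card T0 deg0 M0 less.prems(4)] by blast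
    have ne: "\<forall>e\<in>TE0. l \<notin> e" using sub0 lN0 by auto
    have side: "tside N0 TE0 a b \<inter> M = tside N TE a b \<inter> M" if ab: "{a,b} \<in> TE0" for a b
    proof -
      have neq: "{a,b} \<noteq> {l,p}" using ab notin by auto
      have e: "TE - {{a,b}} = insert {l,p} (TE0 - {{a,b}})" using TT neq by auto
      have ne': "\<forall>e\<in>TE0 - {{a,b}}. l \<notin> e" using ne by auto
      have al: "a \<noteq> l" using ab ne by auto
      have "x \<in> M \<Longrightarrow> (a,x) \<in> (tree_rel (TE - {{a,b}}))\<^sup>* \<longleftrightarrow> (a,x) \<in> (tree_rel (TE0 - {{a,b}}))\<^sup>*" for x
        unfolding e using pend_reach[OF ne' p(2) al, of x] l(2) by auto
      moreover have "M \<subseteq> tleaves N TE" "M \<subseteq> tleaves N0 TE0" using less.prems(3) M0 by auto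
      ultimately show ?thesis unfolding tside_def by auto
    qed
    have "\<forall>a b. {a,b} \<in> TE' \<longrightarrow> tside N' TE' a b = tside N TE a b \<inter> M"
    proof (intro allI impI)
      fix a b assume "{a,b} \<in> TE'"
      then show "tside N' TE' a b = tside N TE a b \<inter> M" using IH(4,5) side[of a b] by auto
    qed
    then show ?thesis using IH TT by (intro exI[of _ N'] exI[of _ TE']) auto
  qed
qed

definition Qc :: "('e \<Rightarrow> 'd) \<Rightarrow> 'd set set \<Rightarrow> 'e set \<Rightarrow> 'e set \<Rightarrow> bool" where
  "Qc \<pi> Xs U Y \<longleftrightarrow> (\<exists>X\<in>Xs. Y = {x\<in>U. \<pi> x \<in> X}) \<or> (\<exists>d. \<forall>x\<in>Y. \<pi> x = d) \<or> (\<exists>d. \<forall>x\<in>U-Y. \<pi> x = d)"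

lemma Qc_step_in:
  assumes "Qc \<pi> Xs U Y" "u \<in> Y" "\<pi> e = \<pi> u"
  shows "Qc \<pi> Xs (insert e U) (insert e Y)"
proof -
  from assms(1) consider (a) X where "X\<in>Xs" "Y = {x\<in>U. \<pi> x \<in> X}" | (b) d where "\<forall>x\<in>Y. \<pi> x = d"
    | (c) d where "\<forall>x\<in>U-Y. \<pi> x = d" unfolding Qc_def by blast
  then show ?thesis
  proof cases
    case a
    then have "insert e Y = {x\<in>insert e U. \<pi> x \<in> X}" using assms(2,3) by auto
    then show ?thesis using a unfolding Qc_def by blast
  next
    case b
    then have "\<forall>x\<in>insert e Y. \<pi> x = d" using assms(2,3) by auto
    then show ?thesis unfolding Qc_def by blast
  next
    case c
    then have "\<forall>x\<in>insert e U - insert e Y. \<pi> x = d" by auto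
    then show ?thesis unfolding Qc_def by blast
  qed
qed

lemma Qc_step_out:
  assumes "Qc \<pi> Xs U Y" "u \<in> U" "u \<notin> Y" "\<pi> e = \<pi> u"
  shows "Qc \<pi> Xs (insert e U) Y"
proof -
  from assms(1) consider (a) X where "X\<in>Xs" "Y = {x\<in>U. \<pi> x \<in> X}" | (b) d where "\<forall>x\<in>Y. \<pi> x = d"
    | (c) d where "\<forall>x\<in>U-Y. \<pi> x = d" unfolding Qc_def by blast
  then show ?thesis
  proof cases
    case a
    then have "\<pi> u \<notin> X" using assms(2,3) by blast
    then have "\<pi> e \<notin> X" using assms(4) by simp
    then have "Y = {x\<in>insert e U. \<pi> x \<in> X}" using a(2) by blast
    then show ?thesis using a unfolding Qc_def by blast
  next
    case b
    then show ?thesis unfolding Qc_def by blast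
  next
    case c
    then have "\<pi> u = d" using assms(2,3) by blast
    then have "\<forall>x\<in>insert e U - Y. \<pi> x = d" using c assms(4) by blast
    then show ?thesis unfolding Qc_def by blast
  qed
qed

lemma tside_isolated:
  assumes "\<forall>e\<in>TE - {{a,b}}. a \<notin> e"
  shows "tside N TE a b \<subseteq> {a}"
proof
  fix x assume "x \<in> tside N TE a b"
  then have "(a,x) \<in> (tree_rel (TE - {{a,b}}))\<^sup>*" unfolding tside_def by auto
  moreover have "\<forall>y. (a,y) \<notin> tree_rel (TE - {{a,b}})" using tree_rel_nodom[OF assms] by auto
  ultimately have "x = a" by (rule rtrancl_isolated)
  then show "x \<in> {a}" by simp
qed

lemma tside_connected:
  assumes "is_tree N' (TE - {{a,b}})" "a \<in> N'"
  shows "tleaves N TE \<inter> N' \<subseteq> tside N TE a b"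
proof
  fix x assume x: "x \<in> tleaves N TE \<inter> N'"
  have "\<forall>u\<in>N'. \<forall>v\<in>N'. (u, v) \<in> (tree_rel (TE - {{a,b}}))\<^sup>*" using assms(1) unfolding is_tree_def by blast
  then show "x \<in> tside N TE a b" using x assms(2) unfolding tside_def by blast
qed

lemma Qc_sub: "S \<subseteq> {m} \<Longrightarrow> Qc \<pi> Xs U (\<tau> ` S)"
  unfolding Qc_def by (intro disjI2 disjI1 exI[of _ "\<pi> (\<tau> m)"]) auto

lemma Qc_co: "L - S \<subseteq> {m} \<Longrightarrow> Qc \<pi> Xs (\<tau> ` L) (\<tau> ` S)"
  unfolding Qc_def by (intro disjI2 exI[of _ "\<pi> (\<tau> m)"]) auto

lemma expand_tree:
  assumes "finite F"
  shows "card (F - \<tau> ` tleaves N TE) = k \<Longrightarrow> is_tree N TE \<Longrightarrow> \<forall>n\<in>N. tdeg TE n \<le> 3 \<Longrightarrow>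
    inj_on \<tau> (tleaves N TE) \<Longrightarrow> \<tau> ` tleaves N TE \<subseteq> F \<Longrightarrow> \<pi> ` F \<subseteq> \<pi> ` (\<tau> ` tleaves N TE) \<Longrightarrow>
    (\<forall>a b. {a,b}\<in>TE \<longrightarrow> Qc \<pi> Xs (\<tau> ` tleaves N TE) (\<tau> ` tside N TE a b)) \<Longrightarrow>
    \<exists>N' TE' \<tau>'. is_tree N' TE' \<and> (\<forall>n\<in>N'. tdeg TE' n \<le> 3) \<and> bij_betw \<tau>' (tleaves N' TE') F \<and>
       (\<forall>a b. {a,b}\<in>TE' \<longrightarrow> Qc \<pi> Xs F (\<tau>' ` tside N' TE' a b))"
proof (induction k arbitrary: N TE \<tau>)
  case 0
  then have "\<tau> ` tleaves N TE = F" using assms by auto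
  then show ?case using 0 unfolding bij_betw_def by blast
next
  case (Suc k)
  note T = Suc.prems(2)
  define L where "L = tleaves N TE"
  define U where "U = \<tau> ` L"
  have U: "U \<subseteq> F" using Suc.prems(5) unfolding U_def L_def .
  have cU: "card (F - U) = Suc k" using Suc.prems(1) unfolding U_def L_def .
  have "F - U \<noteq> {}" proof assume h: "F - U = {}" have "card (F - U) = 0" unfolding h by simp then show False using cU by simp qed
  then obtain e where e: "e \<in> F" "e \<notin> U" by auto
  then have "\<pi> e \<in> \<pi> ` U" using Suc.prems(6) unfolding U_def L_def by auto
  then obtain l where l: "l \<in> L" "\<pi> (\<tau> l) = \<pi> e" unfolding U_def by auto
  have lN: "l \<in> N" and dl: "tdeg TE l \<le> 1" using l unfolding L_def tleaves_def by auto
  have finN: "finite N" using T unfolding is_tree_def by auto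
  define n1 where "n1 = Suc (Max N)"
  define n2 where "n2 = Suc (Suc (Max N))"
  have n1N: "n1 \<notin> N" and n2N: "n2 \<notin> N" using Max_ge[OF finN] unfolding n1_def n2_def by fastforce+
  have n12: "n1 \<noteq> n2" "n1 \<noteq> l" "n2 \<noteq> l" using n1N n2N lN unfolding n1_def n2_def by auto
  define N1 where "N1 = insert n1 N"
  define TE1 where "TE1 = insert {n1,l} TE"
  define N2 where "N2 = insert n2 N1"
  define TE2 where "TE2 = insert {n2,l} TE1"
  have T1: "is_tree N1 TE1" unfolding N1_def TE1_def
    using pend_tree[OF T n1N lN] by (simp add: insert_commute)
  have n2N1: "n2 \<notin> N1" using n2N n12 unfolding N1_def by auto
  have lN1: "l \<in> N1" using lN unfolding N1_def by auto
  have T2: "is_tree N2 TE2" unfolding N2_def TE2_def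
    using pend_tree[OF T1 n2N1 lN1] by (simp add: insert_commute)
  have Talt: "is_tree (insert n2 N) (insert {n2,l} TE)"
    using pend_tree[OF T n2N lN] by (simp add: insert_commute)
  have subTE: "\<forall>x\<in>TE. x \<subseteq> N" using T unfolding is_tree_def by auto
  have subTE1: "\<forall>x\<in>TE1. x \<subseteq> N1" using T1 unfolding is_tree_def by auto
  have ne1: "\<forall>x\<in>TE. n1 \<notin> x" using subTE n1N by auto
  have ne2: "\<forall>x\<in>TE. n2 \<notin> x" using subTE n2N by auto
  have ne21: "\<forall>x\<in>TE1. n2 \<notin> x" using subTE1 n2N1 by auto
  have finTE: "finite TE" using is_tree_finite_TE[OF T] .
  have finTE1: "finite TE1" using is_tree_finite_TE[OF T1] .
  have nin1: "{n1,l} \<notin> TE" using ne1 by auto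
  have nin2: "{n2,l} \<notin> TE1" using ne21 by auto
  have deg: "tdeg TE2 x = tdeg TE x + (if x \<in> {n1,l} then 1 else 0) + (if x \<in> {n2,l} then 1 else 0)" for x
    unfolding TE2_def using tdeg_insert[OF finTE1 nin2, of x] tdeg_insert[OF finTE nin1, of x]
    unfolding TE1_def by simp
  have d0: "tdeg TE n1 = 0" "tdeg TE n2 = 0" using tdeg_zero ne1 ne2 by auto
  have degs: "\<forall>n\<in>N2. tdeg TE2 n \<le> 3"
  proof
    fix x assume x: "x \<in> N2"
    show "tdeg TE2 x \<le> 3"
    proof (cases "x \<in> {n1,n2,l}")
      case True then show ?thesis using deg[of x] d0 dl n12 by auto
    next
      case False then show ?thesis using deg[of x] x Suc.prems(3) unfolding N2_def N1_def by auto
    qed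
  qed
  have L2: "tleaves N2 TE2 = insert n1 (insert n2 (L - {l}))"
  proof -
    have "x \<in> tleaves N2 TE2 \<longleftrightarrow> x \<in> insert n1 (insert n2 (L - {l}))" for x
    proof (cases "x \<in> {n1,n2,l}")
      case True then show ?thesis using deg[of x] d0 n12 unfolding tleaves_def L_def N2_def N1_def by auto
    next
      case False then show ?thesis using deg[of x] unfolding tleaves_def L_def N2_def N1_def by auto
    qed
    then show ?thesis by blast
  qed
  define \<tau>' where "\<tau>' = \<tau>(n1 := \<tau> l, n2 := e)"
  have LN: "L \<subseteq> N" unfolding L_def tleaves_def by auto
  have tau_eq: "\<tau>' x = \<tau> x" if "x \<in> N" for x using that n1N n2N unfolding \<tau>'_def by auto
  have injL: "inj_on \<tau> L" using Suc.prems(4) unfolding L_def .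
  have img: "\<tau>' ` (L - {l}) = \<tau> ` (L - {l})" using tau_eq LN by (intro image_cong) auto
  have tl_notin: "\<tau> l \<notin> \<tau> ` (L - {l})" using injL l(1) by (auto simp: inj_on_def)
  have U2: "\<tau>' ` tleaves N2 TE2 = insert e U"
  proof -
    have "\<tau> ` L = insert (\<tau> l) (\<tau> ` (L - {l}))" using l(1) by auto
    then show ?thesis unfolding L2 U_def using img n12 unfolding \<tau>'_def by auto
  qed
  have inj2: "inj_on \<tau>' (tleaves N2 TE2)"
  proof -
    have i0: "inj_on \<tau>' (L - {l})" unfolding inj_on_def
    proof (intro ballI impI)
      fix x y assume x: "x \<in> L - {l}" and y: "y \<in> L - {l}" and xy: "\<tau>' x = \<tau>' y"
      have "x \<in> N" "y \<in> N" using x y LN by auto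
      then have "\<tau> x = \<tau> y" using tau_eq[of x] tau_eq[of y] xy by simp
      then show "x = y" using injL x y by (auto simp: inj_on_def)
    qed
    have "\<tau>' n2 \<notin> \<tau>' ` (L - {l})" using img e(2) unfolding U_def \<tau>'_def by auto
    then have i1: "inj_on \<tau>' (insert n2 (L - {l}))" using i0 n12 by auto
    have "\<tau>' n1 \<notin> \<tau>' ` (insert n2 (L - {l}))" using img tl_notin e(2) l(1) n12 unfolding U_def \<tau>'_def by auto
    then show ?thesis unfolding L2 using i1 by auto
  qed
  have card2: "card (F - \<tau>' ` tleaves N2 TE2) = k"
  proof -
    have "F - insert e U = (F - U) - {e}" by auto
    then show ?thesis using Suc.prems(1) e unfolding U2 U_def L_def by auto
  qed
  have sub2: "\<tau>' ` tleaves N2 TE2 \<subseteq> F" using U2 U e by auto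
  have surj2: "\<pi> ` F \<subseteq> \<pi> ` (\<tau>' ` tleaves N2 TE2)" using U2 Suc.prems(6) unfolding U_def L_def by auto
  have Q2: "\<forall>a b. {a,b}\<in>TE2 \<longrightarrow> Qc \<pi> Xs (\<tau>' ` tleaves N2 TE2) (\<tau>' ` tside N2 TE2 a b)"
  proof (intro allI impI)
    fix a b assume ab: "{a,b} \<in> TE2"
    have TE2_alt: "TE2 = insert {n1,l} (insert {n2,l} TE)" unfolding TE2_def TE1_def by auto
    have n12s: "{n1,l} \<noteq> {n2,l}" using n12 by (auto simp: doubleton_eq_iff)
    consider (A) "{a,b} = {n2,l}" | (B) "{a,b} = {n1,l}" | (C) "{a,b} \<in> TE"
      using ab unfolding TE2_def TE1_def by auto
    then show "Qc \<pi> Xs (\<tau>' ` tleaves N2 TE2) (\<tau>' ` tside N2 TE2 a b)"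
    proof cases
      case A
      then have rm: "TE2 - {{a,b}} = TE1" using nin2 unfolding TE2_def by auto
      from A have "(a = n2 \<and> b = l) \<or> (a = l \<and> b = n2)" by (auto simp: doubleton_eq_iff)
      then show ?thesis
      proof
        assume h: "a = n2 \<and> b = l"
        have "tside N2 TE2 a b \<subseteq> {n2}" using tside_isolated[of TE2 a b N2] rm ne21 h by auto
        then show ?thesis by (rule Qc_sub)
      next
        assume h: "a = l \<and> b = n2"
        have "tleaves N2 TE2 \<inter> N1 \<subseteq> tside N2 TE2 a b"
          using tside_connected[of N1 TE2 a b N2] rm T1 lN1 h by auto
        then have "tleaves N2 TE2 - tside N2 TE2 a b \<subseteq> {n2}" unfolding N2_def tleaves_def by auto
        then show ?thesis by (rule Qc_co)
      qed
    next
      case B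
      then have rm: "TE2 - {{a,b}} = insert {n2,l} TE" using nin1 n12s unfolding TE2_alt by auto
      from B have "(a = n1 \<and> b = l) \<or> (a = l \<and> b = n1)" by (auto simp: doubleton_eq_iff)
      then show ?thesis
      proof
        assume h: "a = n1 \<and> b = l"
        have "\<forall>x\<in>TE2 - {{a,b}}. a \<notin> x" using rm ne1 h n12 by auto
        then have "tside N2 TE2 a b \<subseteq> {n1}" using tside_isolated[of TE2 a b N2] h by auto
        then show ?thesis by (rule Qc_sub)
      next
        assume h: "a = l \<and> b = n1"
        have "tleaves N2 TE2 \<inter> insert n2 N \<subseteq> tside N2 TE2 a b"
          using tside_connected[of "insert n2 N" TE2 a b N2] rm Talt lN h by auto
        then have "tleaves N2 TE2 - tside N2 TE2 a b \<subseteq> {n1}" unfolding N2_def N1_def tleaves_def by auto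
        then show ?thesis by (rule Qc_co)
      qed
    next
      case C
      define TEab where "TEab = TE - {{a,b}}"
      have aN: "a \<in> N" using tree_edge_nodes[OF T C] by auto
      have an: "a \<noteq> n1" "a \<noteq> n2" using aN n1N n2N by auto
      have rm: "TE2 - {{a,b}} = insert {n2,l} (insert {n1,l} TEab)"
        using C ne1 ne21 unfolding TE2_def TE1_def TEab_def by auto
      have ne1': "\<forall>x\<in>TEab. n1 \<notin> x" using ne1 unfolding TEab_def by auto
      have ne21': "\<forall>x\<in>insert {n1,l} TEab. n2 \<notin> x" using ne21 unfolding TEab_def TE1_def by auto
      have R2: "(a,y) \<in> (tree_rel (insert {n2,l} (insert {n1,l} TEab)))\<^sup>* \<longleftrightarrow>
         (y \<noteq> n2 \<and> (a,y) \<in> (tree_rel (insert {n1,l} TEab))\<^sup>*) \<or> (y = n2 \<and> (a,l) \<in> (tree_rel (insert {n1,l} TEab))\<^sup>*)" for y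
        using pend_reach[OF ne21' n12(3) an(2)] .
      have R1: "(a,y) \<in> (tree_rel (insert {n1,l} TEab))\<^sup>* \<longleftrightarrow>
         (y \<noteq> n1 \<and> (a,y) \<in> (tree_rel TEab)\<^sup>*) \<or> (y = n1 \<and> (a,l) \<in> (tree_rel TEab)\<^sup>*)" for y
        using pend_reach[OF ne1' n12(2) an(1)] .
      define S where "S = tside N TE a b"
      have SL: "S \<subseteq> L" unfolding S_def L_def tside_def by auto
      have side: "tside N2 TE2 a b = (S - {l}) \<union> (if l \<in> S then {n1,n2} else {})"
      proof -
        have "x \<in> tside N2 TE2 a b \<longleftrightarrow> x \<in> (S - {l}) \<union> (if l \<in> S then {n1,n2} else {})" for x
        proof (cases "x \<in> {n1,n2}")
          case True
          have "n1 \<notin> tleaves N TE" "n2 \<notin> tleaves N TE" using n1N n2N unfolding tleaves_def by auto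
          with True show ?thesis unfolding tside_def rm L2 S_def using R2[of x] R1[of x] R1[of l] n12 l(1)
            unfolding L_def TEab_def by auto
        next
          case False
          then show ?thesis unfolding tside_def rm L2 S_def using R2[of x] R1[of x] n12
            unfolding L_def TEab_def by auto
        qed
        then show ?thesis by blast
      qed
      have QS: "Qc \<pi> Xs U (\<tau> ` S)" using Suc.prems(7) C unfolding U_def L_def S_def by auto
      have SN: "S - {l} \<subseteq> N" using SL LN by auto
      have imgS: "\<tau>' ` (S - {l}) = \<tau> ` (S - {l})" using tau_eq SN by (intro image_cong) auto
      show ?thesis
      proof (cases "l \<in> S")
        case True
        have "\<tau>' ` tside N2 TE2 a b = insert e (\<tau> ` S)"
        proof -
          have "\<tau> ` S = insert (\<tau> l) (\<tau> ` (S - {l}))" using True by auto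
          then show ?thesis unfolding side using True imgS n12 unfolding \<tau>'_def by auto
        qed
        then show ?thesis unfolding U2 using Qc_step_in[OF QS _ l(2)[symmetric]] True by auto
      next
        case False
        have "\<tau>' ` tside N2 TE2 a b = \<tau> ` S" unfolding side using False imgS by auto
        moreover have "\<tau> l \<notin> \<tau> ` S" using False injL l(1) SL by (auto simp: inj_on_def)
        ultimately show ?thesis unfolding U2 using Qc_step_out[OF QS _ _ l(2)[symmetric]] l(1)
          unfolding U_def by auto
      qed
    qed
  qed
  show ?case using Suc.IH[OF card2 T2 degs inj2 sub2 surj2 Q2] .
qed

definition Pinj :: "'a set \<Rightarrow> ('a \<times> 'a) set \<Rightarrow> ('a \<Rightarrow> 'b) \<Rightarrow> bool" where
  "Pinj VH EH \<phi> \<longleftrightarrow> (\<forall>v\<in>VH. \<forall>w\<in>VH. \<phi> v = \<phi> w \<longrightarrow> v = w \<or>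
      (is_source VH EH v \<and> is_source VH EH w) \<or> (is_sink VH EH v \<and> is_sink VH EH w))"

lemma ident_inv:
  assumes "ident_step\<^sup>*\<^sup>* G0 G" "G0 = (VH, EH)"
  shows "\<exists>\<phi>. \<phi> ` VH \<subseteq> fst G \<and> snd G = (\<lambda>(a,b). (\<phi> a, \<phi> b)) ` EH \<and> Pinj VH EH \<phi>"
  using assms(1)
proof (induction rule: rtranclp_induct)
  case base
  show ?case using assms(2) by (intro exI[of _ id]) (auto simp: Pinj_def)
next
  case (step G G')
  obtain \<phi> where phi: "\<phi> ` VH \<subseteq> fst G" "snd G = (\<lambda>(a,b). (\<phi> a, \<phi> b)) ` EH" "Pinj VH EH \<phi>"
    using step.IH by blast
  obtain x y g where st0: "x \<noteq> y \<and>
      ((is_source (fst G) (snd G) x \<and> is_source (fst G) (snd G) y) \<or>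
       (is_sink (fst G) (snd G) x \<and> is_sink (fst G) (snd G) y)) \<and>
      g \<notin> fst G - {x, y} \<and>
      fst G' = insert g (fst G - {x, y}) \<and>
      snd G' = {(a, b). (a, b) \<in> snd G \<and> a \<notin> {x, y} \<and> b \<notin> {x, y}}
               \<union> {(a, g) | a. a \<in> in_nbrs (snd G) x \<union> in_nbrs (snd G) y}
               \<union> {(g, b) | b. b \<in> out_nbrs (snd G) x \<union> out_nbrs (snd G) y}"
    using step.hyps(2) unfolding ident_step_def by (elim exE) (erule that)
  note st = conjunct1[OF st0] conjunct1[OF conjunct2[OF st0]] conjunct1[OF conjunct2[OF conjunct2[OF st0]]]
    conjunct1[OF conjunct2[OF conjunct2[OF conjunct2[OF st0]]]] conjunct2[OF conjunct2[OF conjunct2[OF conjunct2[OF st0]]]]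
  define f where "f c = (if c \<in> {x,y} then g else c)" for c
  define \<phi>' where "\<phi>' = f \<circ> \<phi>"
  have img: "(\<lambda>(a,b). (\<phi>' a, \<phi>' b)) ` EH = (\<lambda>(a,b). (f a, f b)) ` snd G"
    unfolding phi(2) \<phi>'_def by auto
  have E': "snd G' = (\<lambda>(a,b). (f a, f b)) ` snd G"
  proof -
    from st(2) show ?thesis
    proof
      assume src: "is_source (fst G) (snd G) x \<and> is_source (fst G) (snd G) y"
      then have nin: "(a,b) \<in> snd G \<Longrightarrow> b \<notin> {x,y}" for a b
        unfolding is_source_def in_nbrs_def by auto
      have i0: "in_nbrs (snd G) x \<union> in_nbrs (snd G) y = {}" using src unfolding is_source_def by auto
      show ?thesis
      proof (rule set_eqI)
        fix p show "p \<in> snd G' \<longleftrightarrow> p \<in> (\<lambda>(a,b). (f a, f b)) ` snd G"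
        proof
          assume "p \<in> snd G'"
          then consider (a) "p \<in> snd G" "fst p \<notin> {x,y}" "snd p \<notin> {x,y}"
            | (b) b where "p = (g,b)" "b \<in> out_nbrs (snd G) x \<union> out_nbrs (snd G) y"
            unfolding st(5) i0 by auto
          then show "p \<in> (\<lambda>(a,b). (f a, f b)) ` snd G"
          proof cases
            case a then have "p = (\<lambda>(a,b). (f a, f b)) p" unfolding f_def by (cases p) auto
            then show ?thesis using a by blast
          next
            case b
            then obtain z where z: "z \<in> {x,y}" "(z,b) \<in> snd G" unfolding out_nbrs_def by auto
            then have "p = (\<lambda>(a,b). (f a, f b)) (z,b)" using b nin[OF z(2)] unfolding f_def by auto
            then show ?thesis using z by blast
          qed
        next
          assume "p \<in> (\<lambda>(a,b). (f a, f b)) ` snd G"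
          then obtain a b where ab: "(a,b) \<in> snd G" "p = (f a, f b)" by auto
          have bx: "b \<notin> {x,y}" using nin[OF ab(1)] .
          show "p \<in> snd G'"
          proof (cases "a \<in> {x,y}")
            case True
            then have "p = (g,b)" "b \<in> out_nbrs (snd G) x \<union> out_nbrs (snd G) y"
              using ab bx unfolding f_def out_nbrs_def by auto
            then show ?thesis unfolding st(5) by blast
          next
            case False
            then have "p = (a,b)" using ab bx unfolding f_def by auto
            then show ?thesis unfolding st(5) using ab(1) False bx by blast
          qed
        qed
      qed
    next
      assume snk: "is_sink (fst G) (snd G) x \<and> is_sink (fst G) (snd G) y"
      then have nin: "(a,b) \<in> snd G \<Longrightarrow> a \<notin> {x,y}" for a b
        unfolding is_sink_def out_nbrs_def by auto
      have o0: "out_nbrs (snd G) x \<union> out_nbrs (snd G) y = {}" using snk unfolding is_sink_def by auto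
      show ?thesis
      proof (rule set_eqI)
        fix p show "p \<in> snd G' \<longleftrightarrow> p \<in> (\<lambda>(a,b). (f a, f b)) ` snd G"
        proof
          assume "p \<in> snd G'"
          then consider (a) "p \<in> snd G" "fst p \<notin> {x,y}" "snd p \<notin> {x,y}"
            | (b) a where "p = (a,g)" "a \<in> in_nbrs (snd G) x \<union> in_nbrs (snd G) y"
            unfolding st(5) o0 by auto
          then show "p \<in> (\<lambda>(a,b). (f a, f b)) ` snd G"
          proof cases
            case a then have "p = (\<lambda>(a,b). (f a, f b)) p" unfolding f_def by (cases p) auto
            then show ?thesis using a by blast
          next
            case (b a)
            then obtain z where z: "z \<in> {x,y}" "(a,z) \<in> snd G" unfolding in_nbrs_def by auto
            then have "p = (\<lambda>(a,b). (f a, f b)) (a,z)" using b nin[OF z(2)] unfolding f_def by auto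
            then show ?thesis using z by blast
          qed
        next
          assume "p \<in> (\<lambda>(a,b). (f a, f b)) ` snd G"
          then obtain a b where ab: "(a,b) \<in> snd G" "p = (f a, f b)" by auto
          have ax: "a \<notin> {x,y}" using nin[OF ab(1)] .
          show "p \<in> snd G'"
          proof (cases "b \<in> {x,y}")
            case True
            then have "p = (a,g)" "a \<in> in_nbrs (snd G) x \<union> in_nbrs (snd G) y"
              using ab ax unfolding f_def in_nbrs_def by auto
            then show ?thesis unfolding st(5) by blast
          next
            case False
            then have "p = (a,b)" using ab ax unfolding f_def by auto
            then show ?thesis unfolding st(5) using ab(1) False ax by blast
          qed
        qed
      qed
    qed
  qed
  have V': "\<phi>' ` VH \<subseteq> fst G'" using phi(1) st(4) unfolding \<phi>'_def f_def by auto
  have srcH: "is_source VH EH v" if "v \<in> VH" "is_source (fst G) (snd G) (\<phi> v)" for v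
  proof -
    have "(u,v) \<notin> EH" for u
    proof
      assume "(u,v) \<in> EH"
      then have "(\<phi> u, \<phi> v) \<in> snd G" unfolding phi(2) by force
      then show False using that(2) unfolding is_source_def in_nbrs_def by auto
    qed
    then show ?thesis using that(1) unfolding is_source_def in_nbrs_def by auto
  qed
  have snkH: "is_sink VH EH v" if "v \<in> VH" "is_sink (fst G) (snd G) (\<phi> v)" for v
  proof -
    have "(v,u) \<notin> EH" for u
    proof
      assume "(v,u) \<in> EH"
      then have "(\<phi> v, \<phi> u) \<in> snd G" unfolding phi(2) by force
      then show False using that(2) unfolding is_sink_def out_nbrs_def by auto
    qed
    then show ?thesis using that(1) unfolding is_sink_def out_nbrs_def by auto
  qed
  have P': "Pinj VH EH \<phi>'" unfolding Pinj_def
  proof (intro ballI impI)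
    fix v w assume v: "v \<in> VH" and w: "w \<in> VH" and eq: "\<phi>' v = \<phi>' w"
    show "v = w \<or> (is_source VH EH v \<and> is_source VH EH w) \<or> (is_sink VH EH v \<and> is_sink VH EH w)"
    proof (cases "\<phi> v \<in> {x,y}")
      case True
      show ?thesis
      proof (cases "\<phi> w \<in> {x,y}")
        case True2: True
        from st(2) show ?thesis
        proof
          assume "is_source (fst G) (snd G) x \<and> is_source (fst G) (snd G) y"
          then have "is_source VH EH v" "is_source VH EH w" using srcH v w True True2 by auto
          then show ?thesis by auto
        next
          assume "is_sink (fst G) (snd G) x \<and> is_sink (fst G) (snd G) y"
          then have "is_sink VH EH v" "is_sink VH EH w" using snkH v w True True2 by auto
          then show ?thesis by auto
        qed
      next
        case False
        then have "\<phi> w = g" using eq True unfolding \<phi>'_def f_def by auto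
        moreover have "\<phi> w \<in> fst G" using phi(1) w by auto
        ultimately show ?thesis using st(3) False by auto
      qed
    next
      case False
      show ?thesis
      proof (cases "\<phi> w \<in> {x,y}")
        case True
        then have "\<phi> v = g" using eq False unfolding \<phi>'_def f_def by auto
        moreover have "\<phi> v \<in> fst G" using phi(1) v by auto
        ultimately show ?thesis using st(3) False by auto
      next
        case False2: False
        then have "\<phi> v = \<phi> w" using eq False unfolding \<phi>'_def f_def by auto
        then show ?thesis using phi(3) v w unfolding Pinj_def by auto
      qed
    qed
  qed
  show ?case using V' img E' P' by (intro exI[of _ \<phi>']) auto
qed

lemma split_phi:
  assumes "source_sink_split VH EH VD ED"
  shows "\<exists>\<phi>. \<phi> ` VH \<subseteq> VD \<and> ED = (\<lambda>(a,b). (\<phi> a, \<phi> b)) ` EH \<and> Pinj VH EH \<phi>"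
proof -
  obtain V' E' where r: "ident_step\<^sup>*\<^sup>* (VH, EH) (V', E')" and iso: "digraph_iso V' E' VD ED"
    using assms unfolding source_sink_split_def by blast
  obtain \<phi> where phi: "\<phi> ` VH \<subseteq> V'" "E' = (\<lambda>(a,b). (\<phi> a, \<phi> b)) ` EH" "Pinj VH EH \<phi>"
    using ident_inv[OF r refl] by auto
  obtain f where f: "bij_betw f V' VD" "ED = (\<lambda>(a,b). (f a, f b)) ` E'"
    using iso unfolding digraph_iso_def by blast
  have "(f \<circ> \<phi>) ` VH \<subseteq> VD" using phi(1) f(1) unfolding bij_betw_def by auto
  moreover have "ED = (\<lambda>(a,b). ((f \<circ> \<phi>) a, (f \<circ> \<phi>) b)) ` EH" unfolding f(2) phi(2) by auto
  moreover have "Pinj VH EH (f \<circ> \<phi>)"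
  proof -
    have "f (\<phi> v) = f (\<phi> w) \<Longrightarrow> v \<in> VH \<Longrightarrow> w \<in> VH \<Longrightarrow> \<phi> v = \<phi> w" for v w
      using f(1) phi(1) unfolding bij_betw_def inj_on_def by auto
    then show ?thesis using phi(3) unfolding Pinj_def by auto
  qed
  ultimately show ?thesis by blast
qed

locale sss =
  fixes VH :: "'a set" and EH :: "('a \<times> 'a) set" and VD :: "'b set" and ED :: "('b \<times> 'b) set"
    and \<phi> :: "'a \<Rightarrow> 'b"
  assumes wfH: "wf_digraph VH EH" and wfD: "wf_digraph VD ED"
    and deg: "\<forall>x. is_source VH EH x \<or> is_sink VH EH x \<longrightarrow> vdegree EH x = 1"
    and EDimg: "ED = (\<lambda>(a,b). (\<phi> a, \<phi> b)) ` EH"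
    and P: "Pinj VH EH \<phi>"
begin

definition pi :: "'a \<times> 'a \<Rightarrow> 'b \<times> 'b" where "pi e = (\<phi> (fst e), \<phi> (snd e))"

lemma ED_pi: "ED = pi ` EH"
  unfolding EDimg pi_def by (auto simp: case_prod_beta)

lemma pi_in: "e \<in> EH \<Longrightarrow> pi e \<in> ED" using ED_pi by auto

lemma finVH: "finite VH" using wfH unfolding wf_digraph_def by auto
lemma finVD: "finite VD" using wfD unfolding wf_digraph_def by auto
lemma EHsub: "EH \<subseteq> VH \<times> VH" using wfH unfolding wf_digraph_def by auto
lemma EDsub: "ED \<subseteq> VD \<times> VD" using wfD unfolding wf_digraph_def by auto
lemma noloopD: "(x,x) \<notin> ED" using wfD unfolding wf_digraph_def by auto
lemma noloopH: "(x,x) \<notin> EH" using wfH unfolding wf_digraph_def by auto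

lemma inVH: "e \<in> EH \<Longrightarrow> v \<in> u_ends e \<Longrightarrow> v \<in> VH"
  using EHsub unfolding u_ends_def by (cases e) auto

lemma F1:
  assumes e: "e1 \<in> EH" "e2 \<in> EH" "e1 \<noteq> e2" and v: "v \<in> u_ends e1" "v \<in> u_ends e2"
  shows "\<not> is_source VH EH v \<and> \<not> is_sink VH EH v"
proof -
  have fo: "finite (out_nbrs EH v)" "finite (in_nbrs EH v)"
    using finVH EHsub unfolding out_nbrs_def in_nbrs_def
    by (auto intro: rev_finite_subset[of VH])
  have ns: False if src: "is_source VH EH v"
  proof -
    have d: "vdegree EH v = 1" using deg src by auto
    have i0: "in_nbrs EH v = {}" using src unfolding is_source_def by auto
    then have c1: "card (out_nbrs EH v) = 1" using d unfolding vdegree_def by auto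
    have "fst e1 = v" using v(1) i0 unfolding u_ends_def in_nbrs_def using e(1) by (cases e1) auto
    moreover have "fst e2 = v" using v(2) i0 unfolding u_ends_def in_nbrs_def using e(2) by (cases e2) auto
    ultimately have q: "e1 = (v, snd e1)" "e2 = (v, snd e2)" by (auto simp: prod_eq_iff)
    have m: "(v, snd e1) \<in> EH" "(v, snd e2) \<in> EH" using e(1,2) q by metis+
    have "snd e1 \<noteq> snd e2" using q e(3) by metis
    moreover have "snd e1 \<in> out_nbrs EH v" "snd e2 \<in> out_nbrs EH v" using m unfolding out_nbrs_def by auto
    ultimately have "snd e1 \<noteq> snd e2" "snd e1 \<in> out_nbrs EH v" "snd e2 \<in> out_nbrs EH v" by auto
    then have "card {snd e1, snd e2} \<le> card (out_nbrs EH v)" by (intro card_mono fo) auto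
    then show False using c1 \<open>snd e1 \<noteq> snd e2\<close> by auto
  qed
  have nt: False if snk: "is_sink VH EH v"
  proof -
    have d: "vdegree EH v = 1" using deg snk by auto
    have o0: "out_nbrs EH v = {}" using snk unfolding is_sink_def by auto
    then have c1: "card (in_nbrs EH v) = 1" using d unfolding vdegree_def by auto
    have "snd e1 = v" using v(1) o0 unfolding u_ends_def out_nbrs_def using e(1) by (cases e1) auto
    moreover have "snd e2 = v" using v(2) o0 unfolding u_ends_def out_nbrs_def using e(2) by (cases e2) auto
    ultimately have q: "e1 = (fst e1, v)" "e2 = (fst e2, v)" by (auto simp: prod_eq_iff)
    have m: "(fst e1, v) \<in> EH" "(fst e2, v) \<in> EH" using e(1,2) q by metis+
    have "fst e1 \<noteq> fst e2" using q e(3) by metis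
    moreover have "fst e1 \<in> in_nbrs EH v" "fst e2 \<in> in_nbrs EH v" using m unfolding in_nbrs_def by auto
    ultimately have "fst e1 \<noteq> fst e2" "fst e1 \<in> in_nbrs EH v" "fst e2 \<in> in_nbrs EH v" by auto
    then have "card {fst e1, fst e2} \<le> card (in_nbrs EH v)" by (intro card_mono fo) auto
    then show False using c1 \<open>fst e1 \<noteq> fst e2\<close> by auto
  qed
  show ?thesis using ns nt by auto
qed

lemma F2in: "v \<in> VH \<Longrightarrow> \<not> is_source VH EH v \<Longrightarrow> \<exists>u. (u,v) \<in> EH"
  unfolding is_source_def in_nbrs_def by auto
lemma F2out: "v \<in> VH \<Longrightarrow> \<not> is_sink VH EH v \<Longrightarrow> \<exists>z. (v,z) \<in> EH"
  unfolding is_sink_def out_nbrs_def by auto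

lemma F3: "v \<in> VH \<Longrightarrow> w \<in> VH \<Longrightarrow> \<not> is_source VH EH v \<Longrightarrow> \<not> is_sink VH EH v \<Longrightarrow> \<phi> w = \<phi> v \<Longrightarrow> w = v"
  using P unfolding Pinj_def by metis

lemma K:
  assumes "e1 \<in> EH" "e2 \<in> EH" "\<phi> (snd e2) = \<phi> (fst e1)"
  shows "snd e2 = fst e1"
proof -
  have in1: "snd e2 \<in> VH" "fst e1 \<in> VH" using assms EHsub by (auto simp: mem_Times_iff)
  have "\<not> is_source VH EH (snd e2)" using assms(2) unfolding is_source_def in_nbrs_def
    by (cases e2) auto
  moreover have "\<not> is_sink VH EH (fst e1)" using assms(1) unfolding is_sink_def out_nbrs_def
    by (cases e1) auto
  ultimately show ?thesis using P in1 assms(3) unfolding Pinj_def by metis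
qed

definition CH :: "('a \<times> 'a) set \<Rightarrow> 'a set" where
  "CH Y = \<Union> (u_ends ` Y) \<inter> \<Union> (u_ends ` (EH - Y))"

lemma ug_CH: "ug_order EH u_ends Y = card (CH Y)"
  unfolding ug_order_def CH_def ..

lemma CH_fin: "Y \<subseteq> EH \<Longrightarrow> finite (CH Y)"
  using finVH inVH unfolding CH_def by (auto intro: rev_finite_subset[of VH])

lemma CH_elim:
  assumes "v \<in> CH Y" "Y \<subseteq> EH"
  obtains e1 e2 where "e1 \<in> Y" "e2 \<in> EH" "e2 \<notin> Y" "v \<in> u_ends e1" "v \<in> u_ends e2" "e1 \<noteq> e2"
    "v \<in> VH" "\<not> is_source VH EH v" "\<not> is_sink VH EH v"
proof -
  obtain e1 e2 where e: "e1 \<in> Y" "e2 \<in> EH" "e2 \<notin> Y" "v \<in> u_ends e1" "v \<in> u_ends e2"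
    using assms(1) unfolding CH_def by auto
  then have "e1 \<noteq> e2" by auto
  moreover have "e1 \<in> EH" using e assms(2) by auto
  ultimately show ?thesis using that e F1[of e1 e2 v] inVH[of e1 v] by auto
qed

lemma CD_fin: "finite (SV ED X \<union> SV ED (ED - X))"
proof -
  have "SV ED X \<union> SV ED (ED - X) \<subseteq> VD" using EDsub unfolding SV_def by auto
  then show ?thesis using finVD by (auto intro: rev_finite_subset)
qed

lemma ord_restrict:
  assumes Y: "Y \<subseteq> EH" and X: "Xd \<subseteq> ED"
    and h1: "\<forall>d\<in>Xd. \<exists>e\<in>Y. pi e = d" and h2: "\<forall>d\<in>ED - Xd. \<exists>e\<in>EH - Y. pi e = d"
  shows "dbw_order ED Xd \<le> ug_order EH u_ends Y"
proof -
  have key: "v \<in> \<phi> ` CH Y" if "(x,v) \<in> ED" "(v,z) \<in> ED" "e2 \<in> EH" "pi e2 = (x,v)" "e1 \<in> EH" "pi e1 = (v,z)"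
     "(e1 \<in> Y \<and> e2 \<notin> Y) \<or> (e1 \<notin> Y \<and> e2 \<in> Y)" for x v z e1 e2
  proof -
    have "\<phi> (snd e2) = \<phi> (fst e1)" using that(4,6) unfolding pi_def by auto
    then have w: "snd e2 = fst e1" using K that(3,5) by auto
    have "fst e1 \<in> u_ends e1" "fst e1 \<in> u_ends e2" using w unfolding u_ends_def by auto
    then have "fst e1 \<in> CH Y" using that(3,5,7) unfolding CH_def by blast
    moreover have "\<phi> (fst e1) = v" using that(6) unfolding pi_def by auto
    ultimately show ?thesis by blast
  qed
  have sub: "SV ED Xd \<union> SV ED (ED - Xd) \<subseteq> \<phi> ` CH Y"
  proof
    fix v assume "v \<in> SV ED Xd \<union> SV ED (ED - Xd)"
    then consider (a) x z where "(x,v) \<in> ED - Xd" "(v,z) \<in> Xd"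
      | (b) x z where "(x,v) \<in> ED - (ED - Xd)" "(v,z) \<in> ED - Xd"
      unfolding SV_def by blast
    then show "v \<in> \<phi> ` CH Y"
    proof cases
      case a
      obtain e2 where "e2 \<in> EH - Y" "pi e2 = (x,v)" using h2 a by blast
      moreover obtain e1 where "e1 \<in> Y" "pi e1 = (v,z)" using h1 a by blast
      ultimately show ?thesis using key[of x v z e2 e1] a X Y by auto
    next
      case b
      obtain e2 where "e2 \<in> Y" "pi e2 = (x,v)" using h1 b by blast
      moreover obtain e1 where "e1 \<in> EH - Y" "pi e1 = (v,z)" using h2 b by blast
      ultimately show ?thesis using key[of x v z e2 e1] b X Y by auto
    qed
  qed
  have "card (SV ED Xd \<union> SV ED (ED - Xd)) \<le> card (\<phi> ` CH Y)"
    using sub by (intro card_mono) (use CH_fin[OF Y] in auto)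
  also have "\<dots> \<le> card (CH Y)" using card_image_le CH_fin[OF Y] by auto
  finally show ?thesis unfolding dbw_order_def ug_CH .
qed

end

lemma ug_sym: "Y \<subseteq> F \<Longrightarrow> ug_order F ends (F - Y) = ug_order F ends Y"
  unfolding ug_order_def by (simp add: Int_commute double_diff)

lemma dbw_full: "dbw_order E E = 0"
  unfolding dbw_order_def SV_def by simp

lemma ug_empty: "ug_order F ends {} = 0"
  unfolding ug_order_def by simp

context sss begin

lemma ord_pre:
  assumes X: "X \<subseteq> ED" and Y: "Y \<subseteq> EH" and h: "\<forall>e\<in>EH. e \<in> Y \<longleftrightarrow> pi e \<in> X"
  shows "ug_order EH u_ends Y \<le> dbw_order ED X"
proof -
  have sub: "\<phi> ` CH Y \<subseteq> SV ED X \<union> SV ED (ED - X)"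
  proof
    fix w assume "w \<in> \<phi> ` CH Y"
    then obtain v where v: "v \<in> CH Y" "w = \<phi> v" by auto
    obtain e1 e2 where e: "e1 \<in> Y" "e2 \<in> EH" "e2 \<notin> Y" "v \<in> u_ends e1" "v \<in> u_ends e2"
      "v \<in> VH" "\<not> is_source VH EH v" "\<not> is_sink VH EH v"
      using CH_elim[OF v(1) Y] by metis
    obtain u where u: "(u,v) \<in> EH" using F2in e(6,7) by auto
    obtain z where z: "(v,z) \<in> EH" using F2out e(6,8) by auto
    have "\<exists>i oe. i \<in> EH \<and> oe \<in> EH \<and> snd i = v \<and> fst oe = v \<and> (i \<in> Y \<longleftrightarrow> oe \<notin> Y)"
    proof (rule ccontr)
      assume "\<not> ?thesis"
      then have all: "\<And>i oe. i \<in> EH \<Longrightarrow> oe \<in> EH \<Longrightarrow> snd i = v \<Longrightarrow> fst oe = v \<Longrightarrow> (i \<in> Y \<longleftrightarrow> oe \<in> Y)"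
        by blast
      have st: "e \<in> Y \<longleftrightarrow> (v,z) \<in> Y" if "e \<in> EH" "v \<in> u_ends e" for e
      proof -
        have "fst e = v \<or> snd e = v" using that(2) unfolding u_ends_def by auto
        then show ?thesis
        proof
          assume "fst e = v"
          then have "e \<in> Y \<longleftrightarrow> (u,v) \<in> Y" using all[OF u that(1)] by auto
          then show ?thesis using all[OF u z] by auto
        next
          assume "snd e = v"
          then show ?thesis using all[OF that(1) z] by auto
        qed
      qed
      have "e1 \<in> EH" using e(1) Y by auto
      then show False using st[of e1] st[of e2] e by auto
    qed
    then obtain i oe where io: "i \<in> EH" "oe \<in> EH" "snd i = v" "fst oe = v" "i \<in> Y \<longleftrightarrow> oe \<notin> Y" by blast
    have pii: "pi i = (\<phi> (fst i), \<phi> v)" "pi oe = (\<phi> v, \<phi> (snd oe))" using io unfolding pi_def by auto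
    show "w \<in> SV ED X \<union> SV ED (ED - X)"
    proof (cases "i \<in> Y")
      case True
      then have "pi i \<in> X" "pi oe \<notin> X" using h io by auto
      then have "w \<in> SV ED (ED - X)" unfolding SV_def using pi_in[OF io(1)] pi_in[OF io(2)] pii v(2)
        by force
      then show ?thesis by auto
    next
      case False
      then have "pi i \<notin> X" "pi oe \<in> X" using h io by auto
      then have "w \<in> SV ED X" unfolding SV_def using pi_in[OF io(1)] pi_in[OF io(2)] pii v(2)
        by force
      then show ?thesis by auto
    qed
  qed
  have inj: "inj_on \<phi> (CH Y)"
  proof (rule inj_onI)
    fix v w assume v: "v \<in> CH Y" and w: "w \<in> CH Y" and eq: "\<phi> v = \<phi> w"
    obtain e1 e2 where e: "v \<in> VH" "\<not> is_source VH EH v" "\<not> is_sink VH EH v"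
      using CH_elim[OF v Y] by metis
    obtain e1 e2 where "w \<in> VH" using CH_elim[OF w Y] by metis
    then show "v = w" using F3[OF e(1) _ e(2,3)] eq by metis
  qed
  have "card (CH Y) = card (\<phi> ` CH Y)" using card_image[OF inj] by simp
  also have "\<dots> \<le> card (SV ED X \<union> SV ED (ED - X))" using sub CD_fin by (intro card_mono) auto
  finally show ?thesis unfolding dbw_order_def ug_CH .
qed

lemma ord_fiber:
  assumes S: "S \<subseteq> EH" and h: "\<forall>e\<in>S. pi e = d" and d: "d \<in> ED"
  shows "ug_order EH u_ends S \<le> dbw_order ED {d}"
proof -
  have sub: "\<phi> ` CH S \<subseteq> SV ED {d} \<union> SV ED (ED - {d})"
  proof
    fix w assume "w \<in> \<phi> ` CH S"
    then obtain v where v: "v \<in> CH S" "w = \<phi> v" by auto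
    obtain e1 e2 where e: "e1 \<in> S" "e2 \<in> EH" "e2 \<notin> S" "v \<in> u_ends e1" "v \<in> u_ends e2"
      "v \<in> VH" "\<not> is_source VH EH v" "\<not> is_sink VH EH v"
      using CH_elim[OF v(1) S] by metis
    have e1H: "e1 \<in> EH" using e(1) S by auto
    have dd: "d = (\<phi> (fst e1), \<phi> (snd e1))" using h e(1) unfolding pi_def by auto
    have nl: "\<phi> (fst e1) \<noteq> \<phi> (snd e1)" using noloopD d dd by metis
    have "fst e1 = v \<or> snd e1 = v" using e(4) unfolding u_ends_def by auto
    then show "w \<in> SV ED {d} \<union> SV ED (ED - {d})"
    proof
      assume fv: "fst e1 = v"
      obtain u where u: "(u,v) \<in> EH" using F2in e(6,7) by auto
      have "(\<phi> u, \<phi> v) \<in> ED" using pi_in[OF u] unfolding pi_def by simp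
      moreover have "(\<phi> u, \<phi> v) \<noteq> d" using dd nl fv by auto
      ultimately have "w \<in> SV ED {d}" unfolding SV_def using dd fv v(2) by auto
      then show ?thesis by auto
    next
      assume sv: "snd e1 = v"
      obtain z where z: "(v,z) \<in> EH" using F2out e(6,8) by auto
      have "(\<phi> v, \<phi> z) \<in> ED" using pi_in[OF z] unfolding pi_def by simp
      moreover have "(\<phi> v, \<phi> z) \<noteq> d" using dd nl sv by auto
      ultimately have "w \<in> SV ED (ED - {d})" unfolding SV_def using dd sv v(2) d by auto
      then show ?thesis by auto
    qed
  qed
  have inj: "inj_on \<phi> (CH S)"
  proof (rule inj_onI)
    fix v w assume v: "v \<in> CH S" and w: "w \<in> CH S" and eq: "\<phi> v = \<phi> w"
    obtain e1 e2 where e: "v \<in> VH" "\<not> is_source VH EH v" "\<not> is_sink VH EH v"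
      using CH_elim[OF v S] by metis
    obtain e1 e2 where "w \<in> VH" using CH_elim[OF w S] by metis
    then show "v = w" using F3[OF e(1) _ e(2,3)] eq by metis
  qed
  have "card (CH S) = card (\<phi> ` CH S)" using card_image[OF inj] by simp
  also have "\<dots> \<le> card (SV ED {d} \<union> SV ED (ED - {d}))" using sub CD_fin by (intro card_mono) auto
  finally show ?thesis unfolding dbw_order_def ug_CH .
qed

end

lemma width_empty:
  assumes "is_tree N TE" "bij_betw \<tau> (tleaves N TE) {}" "ord {} = 0"
  shows "decomp_width ord N TE \<tau> = 0"
proof -
  have "tleaves N TE = {}" using assms(2) unfolding bij_betw_def by auto
  then have "tside N TE a b = {}" for a b unfolding tside_def by auto
  then have "decomp_width ord N TE \<tau> \<le> 0" using assms(3) by (intro width_le[OF assms(1)]) auto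
  then show ?thesis by simp
qed

lemma Inf_dom:
  fixes A B :: "nat set"
  assumes "\<forall>b\<in>B. \<exists>a\<in>A. a \<le> b" "\<forall>a\<in>A. \<exists>b\<in>B. b \<le> a"
  shows "Inf A = Inf B"
proof (cases "A = {}")
  case True
  then have "B = {}" using assms(1) by auto
  then show ?thesis using True by simp
next
  case False
  then have Bne: "B \<noteq> {}" using assms(2) by auto
  have "Inf A \<le> Inf B"
  proof -
    obtain a where "a \<in> A" "a \<le> Inf B" using assms(1) Inf_nat_def1[OF Bne] by blast
    moreover have "Inf A \<le> a" using \<open>a \<in> A\<close> by (rule cInf_lower) simp
    ultimately show ?thesis by simp
  qed
  moreover have "Inf B \<le> Inf A"
  proof -
    obtain b where "b \<in> B" "b \<le> Inf A" using assms(2) Inf_nat_def1[OF False] by blast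
    moreover have "Inf B \<le> b" using \<open>b \<in> B\<close> by (rule cInf_lower) simp
    ultimately show ?thesis by simp
  qed
  ultimately show ?thesis by simp
qed

context sss begin

lemma DW:
  assumes T: "is_tree N TE" and bij: "bij_betw \<sigma> (tleaves N TE) ED" and d: "d \<in> ED"
  shows "dbw_order ED {d} \<le> decomp_width (dbw_order ED) N TE \<sigma>"
proof (cases "TE = {}")
  case True
  have "\<forall>a\<in>N. \<forall>b\<in>N. (a, b) \<in> (tree_rel TE)\<^sup>*" "N \<noteq> {}" using T unfolding is_tree_def by auto
  moreover have "tree_rel TE = {}" using True unfolding tree_rel_def by auto
  ultimately have all: "\<forall>a\<in>N. \<forall>b\<in>N. a = b" "N \<noteq> {}" by auto
  then obtain l where "l \<in> N" by blast
  then have "N = {l}" using all by blast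
  then have "tleaves N TE \<subseteq> {l}" unfolding tleaves_def by auto
  then have "ED \<subseteq> {\<sigma> l}" using bij unfolding bij_betw_def by auto
  then have "ED = {d}" using d by auto
  then show ?thesis using dbw_full[of ED] by simp
next
  case False
  then obtain E where E: "E \<in> TE" by auto
  then have "card E = 2" using T unfolding is_tree_def by auto
  then obtain a b where abE: "E = {a,b}" "a \<noteq> b" unfolding card_2_iff by blast
  then have ab: "{a,b} \<in> TE" using E by simp
  have "a \<noteq> b" using abE by simp
  moreover have "a \<in> N" "b \<in> N" using tree_edge_nodes[OF T ab] by auto
  obtain l where l: "l \<in> tleaves N TE" "\<sigma> l = d" using bij d unfolding bij_betw_def by auto
  have "N \<noteq> {l}" using \<open>a \<noteq> b\<close> \<open>a \<in> N\<close> \<open>b \<in> N\<close> by auto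
  then obtain p where p: "{l,p} \<in> TE" "l \<noteq> p" "p \<in> N" "\<forall>e\<in>TE - {{l,p}}. l \<notin> e"
    using leaf_pendant[OF T l(1)] by auto
  have "tside N TE l p \<subseteq> {l}" using tside_isolated[OF p(4)] .
  moreover have "l \<in> tside N TE l p" using l(1) unfolding tside_def by auto
  ultimately have "tside N TE l p = {l}" by auto
  then have "\<sigma> ` tside N TE l p = {d}" using l by auto
  then show ?thesis using width_ge[OF T p(1), of "dbw_order ED" \<sigma>] by simp
qed

definition rep :: "'b \<times> 'b \<Rightarrow> 'a \<times> 'a" where "rep d = (SOME e. e \<in> EH \<and> pi e = d)"

lemma rep: "d \<in> ED \<Longrightarrow> rep d \<in> EH \<and> pi (rep d) = d"
proof -
  assume "d \<in> ED"
  then have "d \<in> pi ` EH" using ED_pi by simp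
  then have ex: "\<exists>e. e \<in> EH \<and> pi e = d" by blast
  show ?thesis unfolding rep_def using someI_ex[OF ex] .
qed

lemma rep_inj: "inj_on rep ED"
proof (rule inj_onI)
  fix x y assume "x \<in> ED" "y \<in> ED" "rep x = rep y"
  then have "pi (rep x) = x" "pi (rep y) = y" using rep[of x] rep[of y] by blast+
  then show "x = y" using \<open>rep x = rep y\<close> by metis
qed

lemma EH_empty: "EH = {} \<longleftrightarrow> ED = {}" unfolding ED_pi by simp

lemma le1:
  assumes T: "is_tree N TE" and dg: "\<forall>n\<in>N. tdeg TE n \<le> 3" and bij: "bij_betw \<sigma> (tleaves N TE) ED"
  shows "\<exists>N' TE' \<tau>. is_tree N' TE' \<and> (\<forall>n\<in>N'. tdeg TE' n \<le> 3) \<and> bij_betw \<tau> (tleaves N' TE') EH \<and>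
     decomp_width (ug_order EH u_ends) N' TE' \<tau> \<le> decomp_width (dbw_order ED) N TE \<sigma>"
proof (cases "EH = {}")
  case True
  then have "ED = {}" using EH_empty by auto
  have bij': "bij_betw (rep \<circ> \<sigma>) (tleaves N TE) EH" using bij True \<open>ED = {}\<close> unfolding bij_betw_def by auto
  then have "decomp_width (ug_order EH u_ends) N TE (rep \<circ> \<sigma>) = 0"
    using width_empty[OF T, of "rep \<circ> \<sigma>"] True ug_empty by auto
  then show ?thesis using T dg bij' by (intro exI[of _ N] exI[of _ TE] exI[of _ "rep \<circ> \<sigma>"]) auto
next
  case False
  define w where "w = decomp_width (dbw_order ED) N TE \<sigma>"
  define L where "L = tleaves N TE"
  define \<tau>0 where "\<tau>0 = rep \<circ> \<sigma>"
  define Xs where "Xs = {\<sigma> ` tside N TE a b | a b. {a,b} \<in> TE}"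
  have finEH: "finite EH" using finVH EHsub by (meson finite_SigmaI rev_finite_subset)
  have imL: "\<sigma> ` L = ED" using bij unfolding bij_betw_def L_def by auto
  have im0: "\<tau>0 ` L = rep ` ED" unfolding \<tau>0_def image_comp[symmetric] imL ..
  have inj0: "inj_on \<tau>0 L" unfolding \<tau>0_def using bij rep_inj unfolding bij_betw_def L_def
    by (metis comp_inj_on)
  have sub0: "\<tau>0 ` L \<subseteq> EH" using im0 rep by auto
  have surj0: "pi ` EH \<subseteq> pi ` (\<tau>0 ` L)"
  proof
    fix d assume "d \<in> pi ` EH"
    then have "d \<in> ED" using ED_pi by auto
    then have "rep d \<in> rep ` ED" "pi (rep d) = d" using rep[of d] by auto
    then show "d \<in> pi ` (\<tau>0 ` L)" unfolding im0 by (metis image_eqI)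
  qed
  have Q0: "\<forall>a b. {a,b}\<in>TE \<longrightarrow> Qc pi Xs (\<tau>0 ` L) (\<tau>0 ` tside N TE a b)"
  proof (intro allI impI)
    fix a b assume ab: "{a,b} \<in> TE"
    define X where "X = \<sigma> ` tside N TE a b"
    have XED: "X \<subseteq> ED" unfolding X_def using imL unfolding L_def tside_def by auto
    have "\<tau>0 ` tside N TE a b = rep ` X" unfolding X_def \<tau>0_def image_comp ..
    also have "\<dots> = {x \<in> rep ` ED. pi x \<in> X}"
    proof (rule set_eqI)
      fix x show "x \<in> rep ` X \<longleftrightarrow> x \<in> {x \<in> rep ` ED. pi x \<in> X}"
        using XED rep by auto
    qed
    finally have "\<tau>0 ` tside N TE a b = {x \<in> \<tau>0 ` L. pi x \<in> X}" unfolding im0 .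
    moreover have "X \<in> Xs" unfolding Xs_def X_def using ab by auto
    ultimately show "Qc pi Xs (\<tau>0 ` L) (\<tau>0 ` tside N TE a b)" unfolding Qc_def by blast
  qed
  obtain N' TE' \<tau> where R: "is_tree N' TE'" "\<forall>n\<in>N'. tdeg TE' n \<le> 3" "bij_betw \<tau> (tleaves N' TE') EH"
     "\<forall>a b. {a,b}\<in>TE' \<longrightarrow> Qc pi Xs EH (\<tau> ` tside N' TE' a b)"
    using expand_tree[OF finEH refl T dg, of \<tau>0 pi Xs] inj0 sub0 surj0 Q0 unfolding L_def by blast
  have "decomp_width (ug_order EH u_ends) N' TE' \<tau> \<le> w"
  proof (rule width_le[OF R(1)])
    fix a b assume ab: "{a,b} \<in> TE'"
    define Y where "Y = \<tau> ` tside N' TE' a b"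
    have YEH: "Y \<subseteq> EH" using R(3) unfolding Y_def bij_betw_def tside_def by auto
    have fib: "ug_order EH u_ends S \<le> w" if "S \<subseteq> EH" "\<forall>x\<in>S. pi x = d" for S d
    proof (cases "S = {}")
      case True then show ?thesis using ug_empty[of EH u_ends] by simp
    next
      case False
      then obtain x where "x \<in> S" by auto
      then have "x \<in> EH" "pi x = d" using that by auto
      then have "d \<in> ED" using pi_in[of x] by simp
      then show ?thesis using ord_fiber[OF that \<open>d \<in> ED\<close>] DW[OF T bij \<open>d \<in> ED\<close>] unfolding w_def
        by linarith
    qed
    have "Qc pi Xs EH Y" using R(4) ab unfolding Y_def by auto
    then consider (a) X where "X \<in> Xs" "Y = {x\<in>EH. pi x \<in> X}" | (b) d where "\<forall>x\<in>Y. pi x = d"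
      | (c) d where "\<forall>x\<in>EH-Y. pi x = d" unfolding Qc_def by blast
    then show "ug_order EH u_ends (\<tau> ` tside N' TE' a b) \<le> w"
    proof cases
      case a
      then obtain a0 b0 where ab0: "{a0,b0} \<in> TE" "X = \<sigma> ` tside N TE a0 b0" unfolding Xs_def by auto
      have XED: "X \<subseteq> ED" unfolding ab0(2) using imL unfolding L_def tside_def by auto
      have "ug_order EH u_ends Y \<le> dbw_order ED X" using ord_pre[OF XED YEH] a(2) by auto
      also have "\<dots> \<le> w" unfolding w_def ab0(2) by (rule width_ge[OF T ab0(1)])
      finally show ?thesis unfolding Y_def .
    next
      case b then show ?thesis using fib[OF YEH] unfolding Y_def by blast
    next
      case c
      have "ug_order EH u_ends (EH - Y) \<le> w" using fib[of "EH - Y" d] c by auto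
      then show ?thesis using ug_sym[OF YEH, of u_ends] unfolding Y_def by metis
    qed
  qed
  then show ?thesis using R unfolding w_def by blast
qed

lemma le2:
  assumes T: "is_tree N TE" and dg: "\<forall>n\<in>N. tdeg TE n \<le> 3" and bij: "bij_betw \<tau> (tleaves N TE) EH"
  shows "\<exists>N' TE' \<sigma>. is_tree N' TE' \<and> (\<forall>n\<in>N'. tdeg TE' n \<le> 3) \<and> bij_betw \<sigma> (tleaves N' TE') ED \<and>
     decomp_width (dbw_order ED) N' TE' \<sigma> \<le> decomp_width (ug_order EH u_ends) N TE \<tau>"
proof (cases "EH = {}")
  case True
  then have "ED = {}" using EH_empty by auto
  have bij': "bij_betw (pi \<circ> \<tau>) (tleaves N TE) ED" using bij True \<open>ED = {}\<close> unfolding bij_betw_def by auto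
  then have "decomp_width (dbw_order ED) N TE (pi \<circ> \<tau>) = 0"
    using width_empty[OF T, of "pi \<circ> \<tau>"] \<open>ED = {}\<close> dbw_full[of ED] by auto
  then show ?thesis using T dg bij' by (intro exI[of _ N] exI[of _ TE] exI[of _ "pi \<circ> \<tau>"]) auto
next
  case False
  define w where "w = decomp_width (ug_order EH u_ends) N TE \<tau>"
  define L where "L = tleaves N TE"
  define M where "M = {x \<in> L. \<tau> x \<in> rep ` ED}"
  have injL: "inj_on \<tau> L" and imL: "\<tau> ` L = EH" using bij unfolding bij_betw_def L_def by auto
  have repsub: "rep ` ED \<subseteq> EH" using rep by auto
  have imM: "\<tau> ` M = rep ` ED"
  proof
    show "\<tau> ` M \<subseteq> rep ` ED" unfolding M_def by auto
    show "rep ` ED \<subseteq> \<tau> ` M"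
    proof
      fix x assume x: "x \<in> rep ` ED"
      then have "x \<in> \<tau> ` L" using repsub imL by blast
      then obtain y where "y \<in> L" "x = \<tau> y" by blast
      then show "x \<in> \<tau> ` M" using x unfolding M_def by blast
    qed
  qed
  have "M \<subseteq> L" unfolding M_def by auto
  then have "inj_on \<tau> M" using injL inj_on_subset by blast
  then have b1: "bij_betw \<tau> M (rep ` ED)" unfolding bij_betw_def using imM by simp
  have b2: "bij_betw pi (rep ` ED) ED"
    unfolding bij_betw_def
  proof
    show "inj_on pi (rep ` ED)"
    proof (rule inj_onI)
      fix x y assume "x \<in> rep ` ED" "y \<in> rep ` ED" "pi x = pi y"
      then obtain dx dy where "dx \<in> ED" "x = rep dx" "dy \<in> ED" "y = rep dy" by blast
      then show "x = y" using rep[of dx] rep[of dy] \<open>pi x = pi y\<close> by simp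
    qed
    show "pi ` rep ` ED = ED"
    proof
      show "pi ` rep ` ED \<subseteq> ED" using rep by auto
      show "ED \<subseteq> pi ` rep ` ED"
      proof
        fix d assume "d \<in> ED"
        then have "rep d \<in> rep ` ED" "pi (rep d) = d" using rep[of d] by auto
        then show "d \<in> pi ` rep ` ED" by (metis image_eqI)
      qed
    qed
  qed
  define \<sigma> where "\<sigma> = pi \<circ> \<tau>"
  have bM: "bij_betw \<sigma> M ED" unfolding \<sigma>_def using bij_betw_trans[OF b1 b2] .
  have EDne: "ED \<noteq> {}" using False EH_empty by auto
  have Mne: "M \<noteq> {}" using bM EDne unfolding bij_betw_def by auto
  have MsubL: "M \<subseteq> tleaves N TE" unfolding M_def L_def by auto
  obtain N' TE' where R: "is_tree N' TE'" "\<forall>n\<in>N'. tdeg TE' n \<le> 3" "tleaves N' TE' = M" "TE' \<subseteq> TE"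
     "\<forall>a b. {a,b} \<in> TE' \<longrightarrow> tside N' TE' a b = tside N TE a b \<inter> M"
    using restrict_tree[OF T dg MsubL Mne] by blast
  have "decomp_width (dbw_order ED) N' TE' \<sigma> \<le> w"
  proof (rule width_le[OF R(1)])
    fix a b assume ab: "{a,b} \<in> TE'"
    define S where "S = tside N TE a b"
    define Y where "Y = \<tau> ` S"
    have SL: "S \<subseteq> L" unfolding S_def L_def tside_def by auto
    have YEH: "Y \<subseteq> EH" using SL imL unfolding Y_def by auto
    have Xd: "\<sigma> ` tside N' TE' a b = pi ` (\<tau> ` (S \<inter> M))" using R(5) ab unfolding S_def \<sigma>_def
      by (simp add: image_comp)
    have XED: "\<sigma> ` tside N' TE' a b \<subseteq> ED" using bM R(3) unfolding bij_betw_def tside_def by auto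
    have h1: "\<forall>d\<in>\<sigma> ` tside N' TE' a b. \<exists>e\<in>Y. pi e = d" unfolding Xd Y_def by auto
    have h2: "\<forall>d\<in>ED - \<sigma> ` tside N' TE' a b. \<exists>e\<in>EH - Y. pi e = d"
    proof
      fix d assume d: "d \<in> ED - \<sigma> ` tside N' TE' a b"
      then obtain m where m: "m \<in> M" "\<sigma> m = d" using bM unfolding bij_betw_def by auto
      have "m \<notin> S" using d m R(5) ab unfolding S_def by auto
      have "\<tau> m \<notin> Y"
      proof
        assume "\<tau> m \<in> Y"
        then obtain x where "x \<in> S" "\<tau> x = \<tau> m" unfolding Y_def by auto
        then have "x = m" using injL SL m(1) unfolding M_def inj_on_def by auto
        then show False using \<open>x \<in> S\<close> \<open>m \<notin> S\<close> by simp
      qed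
      moreover have "\<tau> m \<in> EH" using m(1) imL unfolding M_def by auto
      ultimately show "\<exists>e\<in>EH - Y. pi e = d" using m(2) unfolding \<sigma>_def by auto
    qed
    have "dbw_order ED (\<sigma> ` tside N' TE' a b) \<le> ug_order EH u_ends Y"
      by (rule ord_restrict[OF YEH XED h1 h2])
    also have "\<dots> \<le> w" unfolding Y_def S_def w_def
      by (rule width_ge[OF T]) (use ab R(4) in blast)
    finally show "dbw_order ED (\<sigma> ` tside N' TE' a b) \<le> w" .
  qed
  moreover have "bij_betw \<sigma> (tleaves N' TE') ED" using bM R(3) by simp
  ultimately show ?thesis using R unfolding w_def by blast
qed

theorem main_eq: "branch_width EH u_ends = dir_branch_width ED"
  unfolding branch_width_def dir_branch_width_def gen_branch_width_def
proof (rule Inf_dom)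
  show "\<forall>b\<in>{w. \<exists>N TE \<tau>. is_tree N TE \<and> (\<forall>n\<in>N. tdeg TE n \<le> 3) \<and> bij_betw \<tau> (tleaves N TE) ED \<and>
          w = decomp_width (dbw_order ED) N TE \<tau>}.
       \<exists>a\<in>{w. \<exists>N TE \<tau>. is_tree N TE \<and> (\<forall>n\<in>N. tdeg TE n \<le> 3) \<and> bij_betw \<tau> (tleaves N TE) EH \<and>
          w = decomp_width (ug_order EH u_ends) N TE \<tau>}. a \<le> b"
    using le1 by blast
  show "\<forall>a\<in>{w. \<exists>N TE \<tau>. is_tree N TE \<and> (\<forall>n\<in>N. tdeg TE n \<le> 3) \<and> bij_betw \<tau> (tleaves N TE) EH \<and>
          w = decomp_width (ug_order EH u_ends) N TE \<tau>}.
       \<exists>b\<in>{w. \<exists>N TE \<tau>. is_tree N TE \<and> (\<forall>n\<in>N. tdeg TE n \<le> 3) \<and> bij_betw \<tau> (tleaves N TE) ED \<and>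
          w = decomp_width (dbw_order ED) N TE \<tau>}. b \<le> a"
    using le2 by blast
qed

end

theorem mainTheorem11:
  fixes VD :: "'b set" and ED :: "('b \<times> 'b) set"
    and VH :: "'a set" and EH :: "('a \<times> 'a) set"
  assumes "wf_digraph VD ED"
    and "source_sink_split VH EH VD ED"
  shows "branch_width EH u_ends = dir_branch_width ED"
proof -
  obtain \<phi> where phi: "\<phi> ` VH \<subseteq> VD" "ED = (\<lambda>(a,b). (\<phi> a, \<phi> b)) ` EH" "Pinj VH EH \<phi>"
    using split_phi[OF assms(2)] by blast
  interpret sss VH EH VD ED \<phi>
    using assms phi unfolding sss_def source_sink_split_def by blast
  show ?thesis by (rule main_eq)
qed

end
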